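(* Let $\mathcal A=\bigcup_{\xi<\kappa}\mathcal A_\xi$ where $(\mathcal A_\xi,\mu_\xi)_{\xi<\kappa}$ satisfy conditions (i)–(iv) below (with $\mathcal A_0,\mu_0$ as in the context being the $0$-th terms and the $\mathcal A_\xi$ increasing). Then $\mathcal A$ carries an almost strictly positive finitely additive probability measure, and the quotient $\mathcal A/\mathrm{fin}$ (by the ideal of finite subsets of $D$) is not $\sigma$-centred. The conditions are: (i) $|\mathcal A_\xi|<\kappa$; (ii) $\mu_\xi$ is an almost strictly positive finitely additive probability measure on $\mathcal A_\xi$; (iii) $\mu_\eta|\mathcal A_\xi=\mu_\xi$ for $\xi<\eta<\kappa$; (iv) for every $J\in\mathcal J$ there is $\varphi\in\omega^J$ with $X_\varphi(\mathcal S^J)\in\mathcal A$ and $D\setminus X_\varphi(\mathcal S^J)$ infinite.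
   Context: $\lambda$ is the product measure on $2^\omega$; $\mathcal E$ the ideal of $A\subseteq 2^\omega$ with $\lambda(\overline A)=0$; $\kappa_0=\mathrm{cov}(\mathcal E)$; $\kappa=\mathrm{cof}[\kappa_0]^{\le\omega}$ (least size of a family of countable subsets of $\kappa_0$ cofinal under inclusion). Fix a countable dense $D\subseteq 2^\omega$ and a bijection $d:\omega\to D$. $\mathcal A_0$ is the subalgebra of $P(D)$ generated by $\{C\cap D: C \text{ clopen}\}$ and the finite subsets of $D$; $\mu_0((C\cap D)\triangle F)=\lambda(C)$ for $C$ clopen, $F$ finite. A finitely additive measure on an algebra $\mathcal B\subseteq P(D)$ is almost strictly positive if it vanishes exactly on the finite members of $\mathcal B$. Fix closed $\lambda$-null $Z_\alpha\subseteq 2^\omega$ ($\alpha<\kappa_0$) covering $2^\omega$, write $Z_\alpha=\bigcap_k C_{\alpha,k}$ with $C_{\alpha,k}$ decreasing clopen, and let $S_\alpha(k)=(C_{\alpha,k}\cap D)\setminus\{d(0),\dots,d(k-1)\}$. $\mathcal J$ is a family of countable subsets of $\kappa_0$ of size $\kappa$ cofinal in $[\kappa_0]^{\le\omega}$; for $J\in\mathcal J$, $\mathcal S^J=\{S_\alpha:\alpha\in J\}$ and $X_\varphi(\mathcal S^J)=\bigcup_{\alpha\in J}S_\alpha(\varphi(\alpha))$ for $\varphi\in\omega^J$. A Boolean algebra is $\sigma$-centred if it is a countable union of centred families (families in which every finite subfamily has nonzero meet) of nonzero elements. *)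

theory Defs
  imports "HOL-Probability.Probability"
begin

text \<open>Cantor space 2^omega is the type nat => bool with the product topology
  (bool carries the discrete = order topology).  lam is the product measure
  of the fair coin measure.\<close>

definition lam :: "(nat \<Rightarrow> bool) measure" where
  "lam = PiM UNIV (\<lambda>_. measure_pmf (bernoulli_pmf (1/2)))"

definition clopen :: "(nat \<Rightarrow> bool) set \<Rightarrow> bool" where
  "clopen C \<longleftrightarrow> open C \<and> closed C"

definition nullE :: "(nat \<Rightarrow> bool) set set" where
  "nullE = {A. closure A \<in> null_sets lam}"

definition gen_algebra :: "'a set \<Rightarrow> 'a set set \<Rightarrow> 'a set set" where
  "gen_algebra \<Omega> G = \<Inter>{B. algebra \<Omega> B \<and> G \<subseteq> B}"

definition A0 :: "(nat \<Rightarrow> bool) set \<Rightarrow> (nat \<Rightarrow> bool) set set" where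
  "A0 D = gen_algebra D ({C \<inter> D | C. clopen C} \<union> {F. finite F \<and> F \<subseteq> D})"

definition fa_prob_measure :: "'a set \<Rightarrow> 'a set set \<Rightarrow> ('a set \<Rightarrow> real) \<Rightarrow> bool" where
  "fa_prob_measure \<Omega> B \<mu> \<longleftrightarrow> algebra \<Omega> B \<and> (\<forall>X\<in>B. 0 \<le> \<mu> X) \<and> \<mu> \<Omega> = 1 \<and>
     (\<forall>X\<in>B. \<forall>Y\<in>B. X \<inter> Y = {} \<longrightarrow> \<mu> (X \<union> Y) = \<mu> X + \<mu> Y)"

definition asp_fa_prob_measure :: "'a set \<Rightarrow> 'a set set \<Rightarrow> ('a set \<Rightarrow> real) \<Rightarrow> bool" where
  "asp_fa_prob_measure \<Omega> B \<mu> \<longleftrightarrow> fa_prob_measure \<Omega> B \<mu> \<and> (\<forall>X\<in>B. \<mu> X = 0 \<longleftrightarrow> finite X)"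

text \<open>B/fin is sigma-centred, stated on representatives: the nonzero elements of B/fin are
  the classes of the infinite members of B, and the meet of finitely many classes is the class
  of the intersection, nonzero iff that intersection is infinite.\<close>
definition sigma_centred_mod_fin :: "'a set set \<Rightarrow> bool" where
  "sigma_centred_mod_fin B \<longleftrightarrow>
     (\<exists>F :: nat \<Rightarrow> 'a set set. (\<Union>n. F n) = {X\<in>B. infinite X} \<and>
        (\<forall>n. \<forall>G. G \<subseteq> F n \<and> finite G \<and> G \<noteq> {} \<longrightarrow> infinite (\<Inter>G)))"

definition S_set :: "(nat \<Rightarrow> bool) set \<Rightarrow> (nat \<Rightarrow> nat \<Rightarrow> bool) \<Rightarrow> ('i \<Rightarrow> nat \<Rightarrow> (nat \<Rightarrow> bool) set)
     \<Rightarrow> 'i \<Rightarrow> nat \<Rightarrow> (nat \<Rightarrow> bool) set" where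
  "S_set D d C \<alpha> k = (C \<alpha> k \<inter> D) - d ` {..<k}"

definition X_phi :: "(nat \<Rightarrow> bool) set \<Rightarrow> (nat \<Rightarrow> nat \<Rightarrow> bool) \<Rightarrow> ('i \<Rightarrow> nat \<Rightarrow> (nat \<Rightarrow> bool) set)
     \<Rightarrow> 'i set \<Rightarrow> ('i \<Rightarrow> nat) \<Rightarrow> (nat \<Rightarrow> bool) set" where
  "X_phi D d C J \<phi> = (\<Union>\<alpha>\<in>J. S_set D d C \<alpha> (\<phi> \<alpha>))"

end

theory Submission
  imports Defs
begin

lemma cU: "compact (UNIV :: (nat \<Rightarrow> bool) set)"
proof -
  have b: "compact_space (euclidean::bool topology)"
    by (simp add: compact_space_def finite_imp_compact)
  have "compact_space (product_topology (\<lambda>i::nat. euclidean::bool topology) UNIV)"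
    using compact_space_product_topology b by blast
  then show ?thesis unfolding euclidean_product_topology
    by (simp add: compact_space_def)
qed

theorem lemma3p2:
  fixes D :: "(nat \<Rightarrow> bool) set" and d :: "nat \<Rightarrow> nat \<Rightarrow> bool"
    and I0 :: "'i set"  \<comment> \<open>index set of cardinality kappa_0 = cov(E)\<close>
    and Z :: "'i \<Rightarrow> (nat \<Rightarrow> bool) set"
    and C :: "'i \<Rightarrow> nat \<Rightarrow> (nat \<Rightarrow> bool) set"
    and JJ :: "'i set set"
    and r :: "'k rel"  \<comment> \<open>cardinal well-order of type kappa\<close>
    and z :: 'k
    and A :: "'k \<Rightarrow> (nat \<Rightarrow> bool) set set"
    and \<mu> :: "'k \<Rightarrow> (nat \<Rightarrow> bool) set \<Rightarrow> real"
  assumes D_countable: "countable D" and D_dense: "closure D = UNIV"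
    and d_bij: "bij_betw d UNIV D"
    \<comment> \<open>Z covers, closed null sets, with clopen decreasing approximations\<close>
    and Z_closed: "\<forall>\<alpha>\<in>I0. closed (Z \<alpha>)"
    and Z_null: "\<forall>\<alpha>\<in>I0. Z \<alpha> \<in> null_sets lam"
    and Z_cover: "(\<Union>\<alpha>\<in>I0. Z \<alpha>) = UNIV"
    and C_clopen: "\<forall>\<alpha>\<in>I0. \<forall>k. clopen (C \<alpha> k)"
    and C_decr: "\<forall>\<alpha>\<in>I0. \<forall>k. C \<alpha> (Suc k) \<subseteq> C \<alpha> k"
    and Z_eq: "\<forall>\<alpha>\<in>I0. Z \<alpha> = (\<Inter>k. C \<alpha> k)"
    \<comment> \<open>|I0| = kappa_0 = cov(E)\<close>
    and kappa0_min: "\<forall>F. F \<subseteq> nullE \<and> \<Union>F = UNIV \<longrightarrow> (card_of I0, card_of F) \<in> ordLeq"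
    \<comment> \<open>r is a cardinal (initial ordinal) equal to kappa = cof([kappa_0]^{<=omega})\<close>
    and r_card: "Card_order r"
    and kappa_min: "\<forall>F. F \<subseteq> {X. X \<subseteq> I0 \<and> countable X} \<and>
                        (\<forall>Y. Y \<subseteq> I0 \<and> countable Y \<longrightarrow> (\<exists>X\<in>F. Y \<subseteq> X))
                        \<longrightarrow> (r, card_of F) \<in> ordLeq"
    \<comment> \<open>JJ: cofinal family of countable subsets of I0 of size kappa\<close>
    and JJ_sub: "JJ \<subseteq> {X. X \<subseteq> I0 \<and> countable X}"
    and JJ_cofinal: "\<forall>Y. Y \<subseteq> I0 \<and> countable Y \<longrightarrow> (\<exists>J\<in>JJ. Y \<subseteq> J)"
    and JJ_card: "(card_of JJ, r) \<in> ordIso"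
    \<comment> \<open>z is the least element (index 0) of r\<close>
    and z_field: "z \<in> Field r" and z_least: "\<forall>\<xi>\<in>Field r. (z, \<xi>) \<in> r"
    \<comment> \<open>0-th terms\<close>
    and A_zero: "A z = A0 D"
    and mu_zero: "\<forall>C' F. clopen C' \<and> finite F \<and> F \<subseteq> D \<longrightarrow>
                     \<mu> z (((C' \<inter> D) - F) \<union> (F - (C' \<inter> D))) = measure lam C'"
    \<comment> \<open>increasing\<close>
    and A_incr: "\<forall>\<xi> \<eta>. (\<xi>, \<eta>) \<in> r \<longrightarrow> A \<xi> \<subseteq> A \<eta>"
    \<comment> \<open>(i)\<close>
    and cond_i: "\<forall>\<xi>\<in>Field r. (card_of (A \<xi>), r) \<in> ordLess"
    \<comment> \<open>(ii)\<close>
    and cond_ii: "\<forall>\<xi>\<in>Field r. asp_fa_prob_measure D (A \<xi>) (\<mu> \<xi>)"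
    \<comment> \<open>(iii)\<close>
    and cond_iii: "\<forall>\<xi> \<eta>. (\<xi>, \<eta>) \<in> r \<and> \<xi> \<noteq> \<eta> \<longrightarrow> (\<forall>X\<in>A \<xi>. \<mu> \<eta> X = \<mu> \<xi> X)"
    \<comment> \<open>(iv)\<close>
    and cond_iv: "\<forall>J\<in>JJ. \<exists>\<phi>. X_phi D d C J \<phi> \<in> (\<Union>\<xi>\<in>Field r. A \<xi>) \<and>
                              infinite (D - X_phi D d C J \<phi>)"
  shows "(\<exists>\<nu>. asp_fa_prob_measure D (\<Union>\<xi>\<in>Field r. A \<xi>) \<nu>) \<and>
         \<not> sigma_centred_mod_fin (\<Union>\<xi>\<in>Field r. A \<xi>)"
proof -
  let ?U = "\<Union>\<xi>\<in>Field r. A \<xi>"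
  have wo: "well_order_on (Field r) r" using r_card card_order_on_well_order_on by blast
  have lin: "linear_order_on (Field r) r" using wo by (simp add: well_order_on_def)
  then have tr: "total_on (Field r) r" and rf: "refl_on (Field r) r"
    by (simp_all add: linear_order_on_def partial_order_on_def preorder_on_def)
  have tot: "(\<xi>, \<eta>) \<in> r \<or> (\<eta>, \<xi>) \<in> r" if "\<xi> \<in> Field r" "\<eta> \<in> Field r" for \<xi> \<eta>
  proof (cases "\<xi> = \<eta>")
    case True then show ?thesis using rf that by (simp add: refl_on_def)
  next
    case False then show ?thesis using tr that by (simp add: total_on_def)
  qed
  have alg: "algebra D (A \<xi>)" if "\<xi> \<in> Field r" for \<xi>
    using cond_ii that unfolding asp_fa_prob_measure_def fa_prob_measure_def by blast
  have compat: "\<mu> \<xi> X = \<mu> \<eta> X" if "\<xi> \<in> Field r" "\<eta> \<in> Field r" "X \<in> A \<xi>" "X \<in> A \<eta>" for \<xi> \<eta> X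
  proof (cases "\<xi> = \<eta>")
    case False
    from tot[OF that(1,2)] show ?thesis
    proof
      assume "(\<xi>, \<eta>) \<in> r" then show ?thesis using cond_iii False that(3) by simp
    next
      assume "(\<eta>, \<xi>) \<in> r" then show ?thesis using cond_iii False that(4) by simp
    qed
  qed simp
  have common: "\<exists>\<theta>\<in>Field r. A \<xi> \<subseteq> A \<theta> \<and> A \<eta> \<subseteq> A \<theta>" if "\<xi> \<in> Field r" "\<eta> \<in> Field r" for \<xi> \<eta>
  proof -
    from tot[OF that] show ?thesis
    proof
      assume "(\<xi>, \<eta>) \<in> r" then show ?thesis using A_incr that by blast
    next
      assume "(\<eta>, \<xi>) \<in> r" then show ?thesis using A_incr that by blast
    qed
  qed
  define \<nu> where "\<nu> X = \<mu> (SOME \<xi>. \<xi> \<in> Field r \<and> X \<in> A \<xi>) X" for X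
  have nu: "\<nu> X = \<mu> \<xi> X" if "\<xi> \<in> Field r" "X \<in> A \<xi>" for \<xi> X
  proof -
    have "\<exists>\<xi>. \<xi> \<in> Field r \<and> X \<in> A \<xi>" using that by blast
    then have "(SOME \<xi>. \<xi> \<in> Field r \<and> X \<in> A \<xi>) \<in> Field r \<and> X \<in> A (SOME \<xi>. \<xi> \<in> Field r \<and> X \<in> A \<xi>)"
      by (rule someI_ex)
    then show ?thesis unfolding \<nu>_def using compat that by blast
  qed
  have algU: "algebra D ?U"
    unfolding algebra_iff_Un
  proof (intro conjI ballI)
    show "?U \<subseteq> Pow D"
    proof (rule UN_least)
      fix \<xi> assume "\<xi> \<in> Field r"
      then interpret algebra D "A \<xi>" by (rule alg)
      show "A \<xi> \<subseteq> Pow D" by (rule space_closed)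
    qed
    interpret az: algebra D "A z" by (rule alg[OF z_field])
    show "{} \<in> ?U" using z_field az.empty_sets by blast
    fix a assume "a \<in> ?U"
    then obtain \<xi> where xi: "\<xi> \<in> Field r" "a \<in> A \<xi>" by blast
    interpret algebra D "A \<xi>" by (rule alg[OF xi(1)])
    have "D - a \<in> A \<xi>" using xi(2) by (rule compl_sets)
    then show "D - a \<in> ?U" using xi(1) by blast
  next
    fix a b assume "a \<in> ?U" "b \<in> ?U"
    then obtain \<xi> \<eta> where "\<xi> \<in> Field r" "\<eta> \<in> Field r" "a \<in> A \<xi>" "b \<in> A \<eta>" by blast
    then obtain \<theta> where th: "\<theta> \<in> Field r" "a \<in> A \<theta>" "b \<in> A \<theta>" using common by blast
    interpret algebra D "A \<theta>" by (rule alg[OF \<open>\<theta> \<in> Field r\<close>])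
    have "a \<union> b \<in> A \<theta>" using th by blast
    then show "a \<union> b \<in> ?U" using \<open>\<theta> \<in> Field r\<close> by blast
  qed
  have part1: "asp_fa_prob_measure D ?U \<nu>"
    unfolding asp_fa_prob_measure_def fa_prob_measure_def
  proof (intro conjI ballI impI algU)
    fix X assume "X \<in> ?U"
    then obtain \<xi> where x: "\<xi> \<in> Field r" "X \<in> A \<xi>" by blast
    then show "0 \<le> \<nu> X" "\<nu> X = 0 \<longleftrightarrow> finite X"
      using nu[OF x] cond_ii unfolding asp_fa_prob_measure_def fa_prob_measure_def by auto
  next
    interpret az: algebra D "A z" by (rule alg[OF z_field])
    have "D \<in> A z" by (rule az.top)
    then show "\<nu> D = 1" using nu[OF z_field] cond_ii z_field
      unfolding asp_fa_prob_measure_def fa_prob_measure_def by auto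
  next
    fix X Y assume "X \<in> ?U" "Y \<in> ?U" "X \<inter> Y = {}"
    then obtain \<xi> \<eta> where "\<xi> \<in> Field r" "\<eta> \<in> Field r" "X \<in> A \<xi>" "Y \<in> A \<eta>" by blast
    then obtain \<theta> where t: "\<theta> \<in> Field r" "X \<in> A \<theta>" "Y \<in> A \<theta>" using common by blast
    interpret at: algebra D "A \<theta>" by (rule alg[OF t(1)])
    have u: "X \<union> Y \<in> A \<theta>" using t by blast
    have "\<mu> \<theta> (X \<union> Y) = \<mu> \<theta> X + \<mu> \<theta> Y"
      using cond_ii t \<open>X \<inter> Y = {}\<close> unfolding asp_fa_prob_measure_def fa_prob_measure_def by blast
    then show "\<nu> (X \<union> Y) = \<nu> X + \<nu> Y" using nu[OF t(1)] t u by simp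
  qed
  have part2: "\<not> sigma_centred_mod_fin ?U"
  proof
    assume "sigma_centred_mod_fin ?U"
    then obtain F :: "nat \<Rightarrow> (nat \<Rightarrow> bool) set set" where
      FU: "(\<Union>n. F n) = {X\<in>?U. infinite X}" and
      Fc: "\<And>n G. G \<subseteq> F n \<Longrightarrow> finite G \<Longrightarrow> G \<noteq> {} \<Longrightarrow> infinite (\<Inter>G)"
    proof -
      from \<open>sigma_centred_mod_fin ?U\<close> obtain F :: "nat \<Rightarrow> (nat \<Rightarrow> bool) set set" where
        h: "(\<Union>n. F n) = {X\<in>?U. infinite X}"
           "\<forall>n. \<forall>G. G \<subseteq> F n \<and> finite G \<and> G \<noteq> {} \<longrightarrow> infinite (\<Inter>G)"
        unfolding sigma_centred_mod_fin_def by (elim exE conjE) (rule that)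
      show ?thesis by (rule that[OF h(1)]) (use h(2) in simp)
    qed
    define K where "K n = {U. clopen U \<and> (\<exists>G. G \<subseteq> F n \<and> finite G \<and> G \<noteq> {} \<and> finite (\<Inter>G - U))}" for n
    have "\<exists>x. x \<in> \<Inter>(K n)" for n
    proof -
      have "UNIV \<inter> \<Inter>(K n) \<noteq> {}"
      proof (rule compact_imp_fip[OF cU])
        fix T assume "T \<in> K n" then show "closed T" unfolding K_def clopen_def by blast
      next
        fix F' assume fF: "finite F'" "F' \<subseteq> K n"
        show "UNIV \<inter> \<Inter>F' \<noteq> {}"
        proof (cases "F' = {}")
          case False
          have "\<forall>U\<in>F'. \<exists>G. G \<subseteq> F n \<and> finite G \<and> G \<noteq> {} \<and> finite (\<Inter>G - U)"
            using fF unfolding K_def by blast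
          then obtain g where g: "\<And>U. U \<in> F' \<Longrightarrow> g U \<subseteq> F n \<and> finite (g U) \<and> g U \<noteq> {} \<and> finite (\<Inter>(g U) - U)"
            by metis
          let ?G = "\<Union>(g ` F')"
          have G1: "?G \<subseteq> F n" "finite ?G" "?G \<noteq> {}" using g fF False by auto
          have inf: "infinite (\<Inter>?G)" using Fc[OF G1] .
          have "\<Inter>?G - \<Inter>F' \<subseteq> (\<Union>U\<in>F'. \<Inter>(g U) - U)" by blast
          moreover have "finite (\<Union>U\<in>F'. \<Inter>(g U) - U)" using fF g by auto
          ultimately have "finite (\<Inter>?G - \<Inter>F')" by (rule finite_subset)
          then have "\<Inter>?G \<inter> \<Inter>F' \<noteq> {}"
          proof (intro notI)
            assume e: "\<Inter>?G \<inter> \<Inter>F' = {}"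
            have "\<Inter>?G - \<Inter>F' = \<Inter>?G" using e by blast
            then show False using inf \<open>finite (\<Inter>?G - \<Inter>F')\<close> by simp
          qed
          then show ?thesis by blast
        qed simp
      qed
      then show ?thesis by blast
    qed
    then obtain x where x: "\<And>n. x n \<in> \<Inter>(K n)" by metis
    have "\<exists>\<alpha>\<in>I0. x n \<in> Z \<alpha>" for n
    proof -
      have "x n \<in> (\<Union>\<alpha>\<in>I0. Z \<alpha>)" by (simp add: Z_cover)
      then show ?thesis by (simp only: UN_iff)
    qed
    then obtain al where al: "\<And>n. al n \<in> I0" "\<And>n. x n \<in> Z (al n)" by metis
    have "range al \<subseteq> I0" using al(1) by blast
    moreover have "countable (range al)" by simp
    ultimately obtain J where J: "J \<in> JJ" "range al \<subseteq> J" using JJ_cofinal by meson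
    from cond_iv J(1) obtain \<phi> where ph: "X_phi D d C J \<phi> \<in> ?U" "infinite (D - X_phi D d C J \<phi>)"
      by meson
    define X where "X = X_phi D d C J \<phi>"
    have ph1: "X \<in> ?U" "infinite (D - X)" using ph unfolding X_def by auto
    obtain \<xi> where xi: "\<xi> \<in> Field r" "X \<in> A \<xi>" using ph1(1) by blast
    interpret ax: algebra D "A \<xi>" by (rule alg[OF xi(1)])
    have "D - X \<in> A \<xi>" using xi(2) by (rule ax.compl_sets)
    then have "D - X \<in> ?U" using xi(1) by blast
    then have "D - X \<in> (\<Union>n. F n)" using FU ph1(2) by simp
    then obtain m where m: "D - X \<in> F m" by blast
    define a where "a = al m"
    define k where "k = \<phi> a"
    have aJ: "a \<in> J" using J(2) unfolding a_def by blast
    have aI: "a \<in> I0" using al(1) unfolding a_def by blast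
    have cla: "clopen (C a k)" using C_clopen aI by blast
    have cl: "clopen (- C a k)" using cla unfolding clopen_def
      by (blast intro: open_Compl closed_Compl)
    have sub: "(D - X) - (- C a k) \<subseteq> d ` {..<k}"
    proof
      fix y assume y: "y \<in> (D - X) - (- C a k)"
      have "S_set D d C a (\<phi> a) \<subseteq> X" using aJ unfolding X_def X_phi_def by blast
      then have "y \<notin> S_set D d C a k" using y unfolding k_def by blast
      then show "y \<in> d ` {..<k}" using y unfolding S_set_def by blast
    qed
    have "finite ((D - X) - (- C a k))" using finite_subset[OF sub] by simp
    then have "finite (\<Inter>{D - X} - (- C a k))" by simp
    then have "- C a k \<in> K m" unfolding K_def using cl m by blast
    then have "x m \<notin> C a k" using x[of m] by blast
    moreover have "x m \<in> C a k"
    proof -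
      have "x m \<in> Z a" using al(2)[of m] unfolding a_def .
      then have "x m \<in> (\<Inter>k. C a k)" using Z_eq aI by simp
      then show ?thesis by blast
    qed
    ultimately show False by blast
  qed
  show ?thesis using part1 part2 by blast
qed

end
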